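(* Suppose $f$ is convex and $L_f$-smooth, $L_{\mathbf S}^{\max}<\infty$, and $\tilde f$ has a minimizer $x^\star_{\mathcal D}$. Let $0<\gamma\le 1/(2L_fL_{\mathbf S}^{\max})$, $T\ge1$, let $(x^t)$ be generated by Double Sketched GD and let $\bar x^T$ be chosen uniformly at random from $\{x^0,\dots,x^{T-1}\}$. Then $$\mathbb E\big[\tilde f(\bar x^T)-\tilde f^{\inf}\big]\le\frac{\|x^0-x^\star_{\mathcal D}\|^2}{\gamma T}+2\gamma L_fL_{\mathbf S}^{\max}\big(\tilde f^{\inf}-f^{\inf}\big).$$
   Context: Let $f:\mathbb R^d\to\mathbb R$, fix $s\in\mathbb R^d$, and let $\mathcal D$ be a distribution of random matrices $\mathbf S\in\mathbb R^{d\times d}$ with $\mathbb E[\mathbf S]=I$ and $\mathbb E[\mathbf S^\top\mathbf S]$ finite. Define $f_{\mathbf S}(x)=f(s+\mathbf S(x-s))$, $\tilde f(x)=\mathbb E_{\mathbf S\sim\mathcal D}[f_{\mathbf S}(x)]$, $\tilde f^{\inf}=\inf_x\tilde f(x)$, and $L_{\mathbf S}^{\max}$ the smallest constant with $\lambda_{\max}(\mathbf S^\top\mathbf S)\le L_{\mathbf S}^{\max}$ a.s. Double Sketched GD: given $x^0$, for $t\ge0$ draw $\mathbf S^t\sim\mathcal D$ independently of the past and set $x^{t+1}=x^t-\gamma(\mathbf S^t)^\top\nabla f(s+\mathbf S^t(x^t-s))$. $f$ is $L_f$-smooth if differentiable, $f(x+h)\le f(x)+\langle\nabla f(x),h\rangle+\frac{L_f}{2}\|h\|^2$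 for all $x,h$, and bounded below by $f^{\inf}\in\mathbb R$. *)

theory Defs
  imports "HOL-Analysis.Analysis" "HOL-Probability.Probability"
begin

text \<open>Largest eigenvalue of a (real, square) matrix: the maximum of its real eigenvalues.
  Applied only to symmetric positive semidefinite matrices S^T S.\<close>
definition lambda_max :: "real^'n^'n \<Rightarrow> real" where
  "lambda_max A = Max {l. \<exists>v. v \<noteq> 0 \<and> A *v v = l *\<^sub>R v}"

definition L_S_max :: "(real^'n^'n) measure \<Rightarrow> real" where
  "L_S_max D = Inf {L. AE S in D. lambda_max (transpose S ** S) \<le> L}"

definition f_sketch :: "(real^'n \<Rightarrow> real) \<Rightarrow> real^'n \<Rightarrow> real^'n^'n \<Rightarrow> real^'n \<Rightarrow> real" where
  "f_sketch f s S x = f (s + S *v (x - s))"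

definition f_tilde :: "(real^'n \<Rightarrow> real) \<Rightarrow> real^'n \<Rightarrow> (real^'n^'n) measure \<Rightarrow> real^'n \<Rightarrow> real" where
  "f_tilde f s D x = (\<integral>S. f_sketch f s S x \<partial>D)"

definition L_smooth :: "real \<Rightarrow> (real^'n \<Rightarrow> real) \<Rightarrow> (real^'n \<Rightarrow> real^'n) \<Rightarrow> bool" where
  "L_smooth L f g \<longleftrightarrow> (\<forall>x. (f has_derivative (\<lambda>h. g x \<bullet> h)) (at x)) \<and>
     (\<forall>x h. f (x + h) \<le> f x + g x \<bullet> h + L / 2 * (norm h)^2)"

text \<open>Double Sketched GD iterates, driven by a sequence of sketches \<omega> t = S^t.\<close>
primrec dsgd :: "(real^'n \<Rightarrow> real^'n) \<Rightarrow> real^'n \<Rightarrow> real \<Rightarrow> real^'n \<Rightarrow> (nat \<Rightarrow> real^'n^'n) \<Rightarrow> nat \<Rightarrow> real^'n" where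
  "dsgd g s \<gamma> x0 \<omega> 0 = x0"
| "dsgd g s \<gamma> x0 \<omega> (Suc t) =
     dsgd g s \<gamma> x0 \<omega> t - \<gamma> *\<^sub>R (transpose (\<omega> t) *v g (s + \<omega> t *v (dsgd g s \<gamma> x0 \<omega> t - s)))"

end

theory Submission
  imports Defs
begin


lemma sym_mat_inner:
  fixes A :: "real^'n^'n" assumes "transpose A = A"
  shows "(A *v a) \<bullet> b = a \<bullet> (A *v b)"
proof -
  have "(A *v a) \<bullet> b = (a v* transpose A) \<bullet> b" by simp
  also have "\<dots> = a \<bullet> (transpose A *v b)" by (rule dot_lmul_matrix)
  finally show ?thesis using assms by simp
qed

lemma inner_mat_transpose:
  fixes S :: "real^'n^'n"
  shows "a \<bullet> (S *v v) = (transpose S *v a) \<bullet> v"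
  by (simp add: dot_lmul_matrix)

lemma sym_eig_finite:
  fixes A :: "real^'n^'n" assumes sym: "transpose A = A"
  shows "finite {l. \<exists>v. v \<noteq> 0 \<and> A *v v = l *\<^sub>R v}"
proof -
  let ?E = "{l. \<exists>v. v \<noteq> 0 \<and> A *v v = l *\<^sub>R v}"
  define v where "v l = (SOME v. v \<noteq> 0 \<and> A *v v = l *\<^sub>R v)" for l
  have v: "v l \<noteq> 0 \<and> A *v v l = l *\<^sub>R v l" if "l \<in> ?E" for l
    using someI_ex[of "\<lambda>v. v \<noteq> 0 \<and> A *v v = l *\<^sub>R v"] that unfolding v_def by auto
  have orth: "v l \<bullet> v m = 0" if "l \<in> ?E" "m \<in> ?E" "l \<noteq> m" for l m
  proof -
    have "l * (v l \<bullet> v m) = (A *v v l) \<bullet> v m" using v[OF that(1)] by simp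
    also have "\<dots> = v l \<bullet> (A *v v m)" by (rule sym_mat_inner[OF sym])
    also have "\<dots> = m * (v l \<bullet> v m)" using v[OF that(2)] by simp
    finally show ?thesis using that(3) by simp
  qed
  have inj: "inj_on v ?E"
  proof (rule inj_onI)
    fix l m assume lm: "l \<in> ?E" "m \<in> ?E" "v l = v m"
    show "l = m"
    proof (rule ccontr)
      assume "l \<noteq> m"
      then have "v l \<bullet> v m = 0" using orth[OF lm(1,2)] by blast
      then have "v l = 0" using lm(3) by (metis inner_eq_zero_iff)
      then show False using v[OF lm(1)] by simp
    qed
  qed
  have "independent (v ` ?E)"
  proof (rule pairwise_orthogonal_independent)
    show "pairwise orthogonal (v ` ?E)"
      unfolding pairwise_def orthogonal_def
    proof (intro ballI impI)
      fix x y assume "x \<in> v ` ?E" "y \<in> v ` ?E" "x \<noteq> y"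
      then obtain l m where "l \<in> ?E" "m \<in> ?E" "x = v l" "y = v m" "l \<noteq> m" by blast
      then show "x \<bullet> y = 0" using orth by blast
    qed
    show "0 \<notin> v ` ?E" using v by force
  qed
  then have "finite (v ` ?E)" by (rule finiteI_independent)
  then show ?thesis using finite_imageD inj by blast
qed

lemma quad_eig:
  fixes p c :: real
  assumes "\<And>t. 0 \<le> 2 * t * p + t^2 * c" "0 \<le> c" "0 \<le> p"
  shows "p = 0"
proof -
  define t where "t = - p / (c + 1)"
  have "0 \<le> 2 * t * p + t^2 * c" by (rule assms(1))
  then have "0 \<le> (c+1)^2 * (2 * t * p + t^2 * c)" by simp
  also have "(c+1)^2 * (2 * t * p + t^2 * c) = - (p^2) * (c + 2)"
  proof -
    have tc: "t * (c + 1) = - p" unfolding t_def using assms(2) by simp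
    have "(c+1)^2 * (2 * t * p + t^2 * c) = 2 * (t * (c + 1)) * p * (c + 1) + (t * (c + 1))^2 * c"
      by (simp add: power2_eq_square algebra_simps)
    also have "\<dots> = - (p^2) * (c + 2)" unfolding tc by (simp add: power2_eq_square algebra_simps)
    finally show ?thesis .
  qed
  finally have "0 \<le> - (p^2) * (c + 2)" .
  then have "p^2 * (c + 2) \<le> 0" by simp
  moreover have "0 < c + 2" using assms(2) by simp
  ultimately have "p^2 \<le> 0" by (simp add: mult_le_0_iff)
  then show ?thesis by simp
qed

lemma norm_sq_le_lambda_max:
  fixes S :: "real^'n^'n"
  shows "(norm (S *v h))^2 \<le> lambda_max (transpose S ** S) * (norm h)^2 \<and> 0 \<le> lambda_max (transpose S ** S)"
proof -
  define A where "A = transpose S ** S"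
  have sym: "transpose A = A" unfolding A_def by (simp add: matrix_transpose_mul)
  have key: "a \<bullet> (A *v b) = (S *v a) \<bullet> (S *v b)" for a b
    unfolding A_def matrix_vector_mul_assoc[symmetric]
    by (simp add: inner_commute[of a] dot_lmul_matrix inner_commute[of "S *v b"])
  have cont: "continuous_on (sphere 0 1) (\<lambda>y. (norm (S *v y))^2)"
    by (intro continuous_intros linear_continuous_on matrix_vector_mul_linear)
  have ne: "sphere (0::real^'n) 1 \<noteq> {}" by simp
  obtain h0 where h0: "h0 \<in> sphere 0 1" and mx: "\<And>y. y \<in> sphere 0 1 \<Longrightarrow> (norm (S *v y))^2 \<le> (norm (S *v h0))^2"
    using continuous_attains_sup[OF compact_sphere ne cont] by blast
  define \<mu> where "\<mu> = (norm (S *v h0))^2"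
  have nh0: "norm h0 = 1" using h0 by simp
  have bound: "(norm (S *v h))^2 \<le> \<mu> * (norm h)^2" for h
  proof (cases "h = 0")
    case True then show ?thesis by simp
  next
    case False
    then have "(1 / norm h) *\<^sub>R h \<in> sphere 0 1" by simp
    from mx[OF this] have "(norm (S *v h))^2 / (norm h)^2 \<le> \<mu>"
      unfolding \<mu>_def by (simp add: matrix_vector_mult_scaleR power_divide)
    then show ?thesis using False by (simp add: field_simps)
  qed
  define w where "w = \<mu> *\<^sub>R h0 - A *v h0"
  define a where "a = h0 \<bullet> w"
  define b where "b = (A *v h0) \<bullet> w"
  define p where "p = (norm w)^2"
  define q where "q = (norm (S *v w))^2"
  have p_eq: "p = \<mu> * a - b" unfolding p_def a_def b_def
    by (simp add: power2_norm_eq_inner w_def[of] inner_diff_left)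
  have c_nn: "0 \<le> \<mu> * p - q" using bound[of w] unfolding p_def q_def by simp
  have "0 \<le> 2 * t * p + t^2 * (\<mu> * p - q)" for t
  proof -
    have "(norm (S *v (h0 + t *\<^sub>R w)))^2 \<le> \<mu> * (norm (h0 + t *\<^sub>R w))^2" by (rule bound)
    moreover have "(norm (h0 + t *\<^sub>R w))^2 = 1 + 2 * t * a + t^2 * p"
    proof -
      have "(norm (h0 + t *\<^sub>R w))^2 = (h0 \<bullet> h0) + 2*t*(h0 \<bullet> w) + t^2 * (w \<bullet> w)"
        by (simp add: power2_norm_eq_inner inner_add_left inner_add_right power2_eq_square[of t] inner_commute algebra_simps)
      moreover have "h0 \<bullet> h0 = 1" using nh0 power2_norm_eq_inner[of h0] by simp
      moreover have "w \<bullet> w = p" unfolding p_def by (simp add: power2_norm_eq_inner)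
      ultimately show ?thesis unfolding a_def by simp
    qed
    moreover have "(norm (S *v (h0 + t *\<^sub>R w)))^2 = \<mu> + 2 * t * b + t^2 * q"
    proof -
      have "(S *v h0) \<bullet> (S *v w) = b" unfolding b_def key[symmetric]
        by (simp add: sym_mat_inner[OF sym])
      moreover have "(norm (S *v h0 + t *\<^sub>R (S *v w)))^2 = (S *v h0) \<bullet> (S *v h0) + 2*t*((S *v h0) \<bullet> (S *v w)) + t^2 * ((S *v w) \<bullet> (S *v w))"
        by (simp add: power2_norm_eq_inner inner_add_left inner_add_right power2_eq_square[of t] inner_commute algebra_simps)
      ultimately show ?thesis unfolding \<mu>_def q_def
        by (simp add: matrix_vector_right_distrib matrix_vector_mult_scaleR power2_norm_eq_inner)
    qed
    ultimately have "\<mu> + 2 * t * b + t^2 * q \<le> \<mu> * (1 + 2 * t * a + t^2 * p)" by simp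
    then show ?thesis unfolding p_eq by (simp add: algebra_simps)
  qed
  then have "p = 0" using quad_eig[of p "\<mu> * p - q"] c_nn unfolding p_def by auto
  then have "w = 0" unfolding p_def by simp
  then have "A *v h0 = \<mu> *\<^sub>R h0" unfolding w_def by simp
  moreover have "h0 \<noteq> 0" using nh0 by auto
  ultimately have "\<mu> \<in> {l. \<exists>v. v \<noteq> 0 \<and> A *v v = l *\<^sub>R v}" by blast
  then have "\<mu> \<le> lambda_max A" unfolding lambda_max_def using sym_eig_finite[OF sym] by simp
  moreover have "0 \<le> \<mu>" unfolding \<mu>_def by simp
  ultimately show ?thesis using bound[of h] unfolding A_def
    by (meson dual_order.trans mult_right_mono zero_le_power2)
qed




lemma aux_e3: "0 < L \<Longrightarrow> (n::real)/L - L/2*(n/L^2) = n/(2*L)"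
  by (simp add: field_simps power2_eq_square)
lemma aux_e4: "0 < a \<Longrightarrow> 0 < b \<Longrightarrow> a / 2 * (b * ((n::real) / (a*b)^2)) = n / (2 * (a*b))"
  by (simp add: field_simps power2_eq_square)
lemma aux_e5: "0 < L \<Longrightarrow> (n::real) / L - n / (2 * L) = n / (2 * L)"
  by (simp add: field_simps)
lemma aux_e6: "0 < L \<Longrightarrow> (n::real) / (2 * L) \<le> c \<Longrightarrow> n \<le> 2 * L * c"
  by (simp add: field_simps)


lemma L_S_max_props:
  fixes D :: "(real^'n^'n) measure"
  assumes D: "prob_space D"
    and fin: "\<exists>L. AE S in D. lambda_max (transpose S ** S) \<le> L"
  shows "0 \<le> L_S_max D" "AE S in D. lambda_max (transpose S ** S) \<le> L_S_max D"
proof -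
  interpret prob_space D by (rule D)
  let ?\<Lambda> = "{L. AE S in D. lambda_max (transpose S ** S) \<le> L}"
  have ne: "?\<Lambda> \<noteq> {}" using fin by auto
  have lb: "0 \<le> L" if "L \<in> ?\<Lambda>" for L
  proof -
    from that have "AE S in D. lambda_max (transpose S ** S) \<le> L" by simp
    then have "AE S in D. 0 \<le> L"
    proof eventually_elim
      case (elim S)
      have "0 \<le> lambda_max (transpose S ** S)" using norm_sq_le_lambda_max[of S 0] by blast
      then show ?case using elim by linarith
    qed
    then show ?thesis by simp
  qed
  show "0 \<le> L_S_max D" unfolding L_S_max_def using ne lb by (intro cInf_greatest) auto
  have "AE S in D. lambda_max (transpose S ** S) \<le> L_S_max D + 1 / real (Suc n)" for n
  proof -
    have "L_S_max D < L_S_max D + 1 / real (Suc n)" by simp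
    then obtain L where "L \<in> ?\<Lambda>" "L < L_S_max D + 1 / real (Suc n)"
      unfolding L_S_max_def using cInf_lessD[OF ne] by blast
    then show ?thesis by (auto elim: AE_mp)
  qed
  then have "AE S in D. \<forall>n. lambda_max (transpose S ** S) \<le> L_S_max D + 1 / real (Suc n)"
    by (simp add: AE_all_countable)
  then show "AE S in D. lambda_max (transpose S ** S) \<le> L_S_max D"
  proof eventually_elim
    case (elim S)
    show ?case
    proof (rule ccontr)
      assume "\<not> ?case"
      then have "0 < lambda_max (transpose S ** S) - L_S_max D" by simp
      then obtain n where "inverse (real (Suc n)) < lambda_max (transpose S ** S) - L_S_max D"
        using reals_Archimedean by blast
      with elim[rule_format, of n] show False by (simp add: field_simps)
    qed
  qed
qed

lemma tangent_ineq:
  fixes f :: "real^'n \<Rightarrow> real"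
  assumes cvx: "convex_on UNIV f" and d: "(f has_derivative (\<lambda>h. g \<bullet> h)) (at y)"
  shows "f y + g \<bullet> (z - y) \<le> f z"
proof -
  define \<phi> where "\<phi> = (\<lambda>t::real. f (y + t *\<^sub>R (z - y)))"
  have c\<phi>: "convex_on UNIV \<phi>"
  proof (rule convex_onI)
    fix t a b :: real assume t: "t > 0" "t < 1"
    have "y + ((1 - t) * a + t * b) *\<^sub>R (z - y) = (1-t) *\<^sub>R (y + a *\<^sub>R (z-y)) + t *\<^sub>R (y + b *\<^sub>R (z-y))"
      by (simp add: algebra_simps)
    then show "\<phi> ((1 - t) *\<^sub>R a + t *\<^sub>R b) \<le> (1 - t) * \<phi> a + t * \<phi> b"
      using convex_onD[OF cvx, of t "y + a *\<^sub>R (z-y)" "y + b *\<^sub>R (z-y)"] t unfolding \<phi>_def by simp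
  qed simp
  have d1: "((\<lambda>t::real. y + t *\<^sub>R (z - y)) has_derivative (\<lambda>t. t *\<^sub>R (z - y))) (at 0)"
    by (auto intro!: derivative_eq_intros)
  have d2: "(f has_derivative (\<lambda>h. g \<bullet> h)) (at (y + 0 *\<^sub>R (z - y)))" using d by simp
  have "(\<phi> has_derivative ((\<lambda>h. g \<bullet> h) \<circ> (\<lambda>t. t *\<^sub>R (z - y)))) (at 0)"
    unfolding \<phi>_def using diff_chain_at[OF d1 d2] by (simp add: comp_def)
  moreover have "((\<lambda>h. g \<bullet> h) \<circ> (\<lambda>t. t *\<^sub>R (z - y))) = (\<lambda>t. (g \<bullet> (z - y)) * t)"
    by (auto simp: comp_def)
  ultimately have "(\<phi> has_field_derivative (g \<bullet> (z - y))) (at 0 within UNIV)"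
    by (simp add: has_field_derivative_def)
  from convex_on_imp_above_tangent[OF c\<phi> _ _ _ this, of 1]
  have "g \<bullet> (z - y) * (1 - 0) \<le> \<phi> 1 - \<phi> 0" by simp
  then show ?thesis unfolding \<phi>_def by simp
qed

lemma grad_lipschitz:
  fixes f :: "real^'n \<Rightarrow> real"
  assumes sm: "L_smooth L f g" and cvx: "convex_on UNIV f" and L: "0 < L"
  shows "norm (g x - g y) \<le> L * norm (x - y)"
proof -
  have der: "\<And>x. (f has_derivative (\<lambda>h. g x \<bullet> h)) (at x)"
    and up: "\<And>x h. f (x + h) \<le> f x + g x \<bullet> h + L / 2 * (norm h)^2"
    using sm unfolding L_smooth_def by auto
  define u where "u = g x - g y"
  define h where "h = (1 / L) *\<^sub>R u"
  define A where "A = g x \<bullet> h"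
  define B where "B = g y \<bullet> h"
  define C where "C = g y \<bullet> (x - y)"
  define N where "N = (norm h)^2"
  have t1: "f y + g y \<bullet> ((x - h) - y) \<le> f (x - h)" by (rule tangent_ineq[OF cvx der])
  have "(x - h) - y = (x - y) - h" by simp
  then have "g y \<bullet> ((x - h) - y) = C - B" unfolding C_def B_def by (simp only: inner_diff_right)
  with t1 have t1': "f y + C - B \<le> f (x - h)" by simp
  have t2: "f (x + - h) \<le> f x + g x \<bullet> (- h) + L / 2 * (norm (- h))^2" by (rule up)
  then have t2': "f (x - h) \<le> f x - A + L / 2 * N" unfolding A_def N_def by simp
  have t3: "f (y + (x - y)) \<le> f y + g y \<bullet> (x - y) + L / 2 * (norm (x - y))^2" by (rule up)
  then have t3': "f x \<le> f y + C + L / 2 * (norm (x - y))^2" unfolding C_def by simp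
  have e1: "A - B = (norm u)^2 / L"
  proof -
    have "A - B = u \<bullet> h" unfolding A_def B_def u_def by (simp add: inner_diff_left)
    also have "\<dots> = (norm u)^2 / L" unfolding h_def by (simp add: power2_norm_eq_inner)
    finally show ?thesis .
  qed
  have e2: "N = (norm u)^2 / L^2"
    unfolding N_def h_def using L by (simp add: power_divide)
  have e3: "(norm u)^2 / L - L / 2 * ((norm u)^2 / L^2) = (norm u)^2 / (2 * L)"
    using L by (rule aux_e3)
  have "(norm u)^2 / (2 * L) \<le> L / 2 * (norm (x - y))^2"
  proof -
    have t2'': "f (x - h) \<le> f x - A + L / 2 * ((norm u)^2 / L^2)" using t2' unfolding e2 .
    show ?thesis using t1' t2'' t3' e1 e3 by linarith
  qed
  then have "2 * L * ((norm u)^2 / (2 * L)) \<le> 2 * L * (L / 2 * (norm (x - y))^2)"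
    using L by (intro mult_left_mono) auto
  moreover have "2 * L * ((norm u)^2 / (2 * L)) = (norm u)^2" using L by simp
  moreover have "2 * L * (L / 2 * (norm (x - y))^2) = (L * norm (x - y))^2"
    by (simp add: power2_eq_square)
  ultimately have "(norm u)^2 \<le> (L * norm (x - y))^2" by simp
  then have "norm u \<le> L * norm (x - y)"
    by (rule power2_le_imp_le) (use L in simp)
  then show ?thesis unfolding u_def .
qed

lemma grad_cont:
  fixes f :: "real^'n \<Rightarrow> real"
  assumes sm: "L_smooth L f g" and cvx: "convex_on UNIV f" and L: "0 < L"
  shows "continuous_on UNIV g"
proof -
  have "L-lipschitz_on UNIV g"
  proof (rule lipschitz_onI)
    fix x y :: "real^'n"
    show "dist (g x) (g y) \<le> L * dist x y"
      unfolding dist_norm by (rule grad_lipschitz[OF sm cvx L])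
  next
    show "0 \<le> L" using L by simp
  qed
  then show ?thesis by (rule lipschitz_on_continuous_on)
qed

lemma f_cont:
  fixes f :: "real^'n \<Rightarrow> real"
  assumes sm: "L_smooth L f g"
  shows "continuous_on UNIV f"
proof -
  have "isCont f x" for x
  proof -
    have "(f has_derivative (\<lambda>h. g x \<bullet> h)) (at x)" using sm unfolding L_smooth_def by auto
    then show ?thesis by (rule has_derivative_continuous)
  qed
  then show ?thesis by (simp add: continuous_at_imp_continuous_on)
qed




lemma cont_mv:
  fixes A :: "'a::topological_space \<Rightarrow> real^'n^'m" and v :: "'a \<Rightarrow> real^'n"
  assumes A: "continuous_on U A" and v: "continuous_on U v"
  shows "continuous_on U (\<lambda>z. A z *v v z)"
proof -
  have "continuous_on U (\<lambda>z. \<chi> i. \<Sum>j\<in>UNIV. A z $ i $ j * v z $ j)"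
  proof (rule continuous_on_vec_lambda)
    fix i
    show "continuous_on U (\<lambda>z. \<Sum>j\<in>UNIV. A z $ i $ j * v z $ j)"
    proof (rule continuous_on_sum)
      fix j
      have "continuous_on U (\<lambda>z. A z $ i)" by (rule continuous_on_component[OF A])
      then have "continuous_on U (\<lambda>z. A z $ i $ j)" by (rule continuous_on_component)
      moreover have "continuous_on U (\<lambda>z. v z $ j)" by (rule continuous_on_component[OF v])
      ultimately show "continuous_on U (\<lambda>z. A z $ i $ j * v z $ j)" by (rule continuous_on_mult)
    qed
  qed
  then show ?thesis unfolding matrix_vector_mult_def .
qed

lemma cont_tr:
  fixes A :: "'a::topological_space \<Rightarrow> real^'n^'m"
  assumes A: "continuous_on U A"
  shows "continuous_on U (\<lambda>z. transpose (A z))"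
proof -
  have "continuous_on U (\<lambda>z. \<chi> i. \<chi> j. A z $ j $ i)"
  proof (rule continuous_on_vec_lambda)+
    fix i j
    have "continuous_on U (\<lambda>z. A z $ j)" by (rule continuous_on_component[OF A])
    then show "continuous_on U (\<lambda>z. A z $ j $ i)" by (rule continuous_on_component)
  qed
  then show ?thesis unfolding transpose_def .
qed

lemma inner_mv_as_mat:
  fixes S :: "real^'n^'n"
  shows "g \<bullet> (S *v w) = S \<bullet> (\<chi> i j. g$i * w$j)"
  by (simp add: inner_vec_def matrix_vector_mult_def sum_distrib_left mult_ac)

lemma norm_mv_sq:
  fixes S :: "real^'n^'n"
  shows "(norm (S *v w))^2 = (transpose S ** S) \<bullet> (\<chi> i j. w$i * w$j)"
proof -
  have "(norm (S *v w))^2 = w \<bullet> ((transpose S ** S) *v w)"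
    unfolding matrix_vector_mul_assoc[symmetric]
    by (simp add: power2_norm_eq_inner inner_commute[of w] dot_lmul_matrix)
  then show ?thesis by (simp add: inner_mv_as_mat)
qed

locale dsgd_setting = prob_space D for D :: "(real^'n^'n) measure" +
  fixes f :: "real^'n \<Rightarrow> real" and gradf :: "real^'n \<Rightarrow> real^'n"
    and s :: "real^'n" and Lf Lm finf \<gamma> :: real
  assumes D_sets: "sets D = sets borel"
    and ES: "integrable D (\<lambda>S. S)"
    and ESTS: "integrable D (\<lambda>S. transpose S ** S)"
    and convex: "convex_on UNIV f"
    and smooth: "L_smooth Lf f gradf"
    and Lf_pos: "0 < Lf" and Lm_pos: "0 < Lm"
    and AE_bound: "AE S in D. \<forall>h. (norm (S *v h))^2 \<le> Lm * (norm h)^2"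
    and finf_le: "\<And>y. finf \<le> f y"
    and gamma_pos: "0 < \<gamma>" and gamma_le: "2 * \<gamma> * (Lf * Lm) \<le> 1"
begin

definition step :: "real^'n \<Rightarrow> real^'n^'n \<Rightarrow> real^'n" where
  "step x S = x - \<gamma> *\<^sub>R (transpose S *v gradf (s + S *v (x - s)))"

lemma meas_D: "measurable D M = measurable borel M"
  by (rule measurable_cong_sets[OF D_sets refl])

lemma f_contI: "continuous_on UNIV f" by (rule f_cont[OF smooth])
lemma g_contI: "continuous_on UNIV gradf" by (rule grad_cont[OF smooth convex Lf_pos])

lemma der: "(f has_derivative (\<lambda>h. gradf x \<bullet> h)) (at x)"
  using smooth unfolding L_smooth_def by auto
lemma up: "f (x + h) \<le> f x + gradf x \<bullet> h + Lf / 2 * (norm h)^2"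
  using smooth unfolding L_smooth_def by auto

lemma cont_gy: "continuous_on UNIV (\<lambda>p. gradf (s + snd p *v (fst p - s)))"
proof -
  have "continuous_on UNIV (\<lambda>p::(real^'n) \<times> (real^'n^'n). snd p *v (fst p - s))"
    by (rule cont_mv) (intro continuous_intros)+
  then have "continuous_on UNIV (\<lambda>p::(real^'n) \<times> (real^'n^'n). s + snd p *v (fst p - s))"
    by (intro continuous_intros)
  then show ?thesis by (rule continuous_on_compose2[OF g_contI]) auto
qed

lemma step_cont: "continuous_on UNIV (\<lambda>p. step (fst p) (snd p))"
proof -
  have "continuous_on UNIV (\<lambda>p::(real^'n) \<times> (real^'n^'n). transpose (snd p) *v gradf (s + snd p *v (fst p - s)))"
  proof -
    have "continuous_on UNIV (\<lambda>p::(real^'n) \<times> (real^'n^'n). snd p)" by (intro continuous_intros)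
    from cont_mv[OF cont_tr[OF this] cont_gy] show ?thesis .
  qed
  then have "continuous_on UNIV (\<lambda>p::(real^'n) \<times> (real^'n^'n). fst p - \<gamma> *\<^sub>R (transpose (snd p) *v gradf (s + snd p *v (fst p - s))))"
    by (intro continuous_on_diff continuous_on_scaleR continuous_on_fst continuous_on_id continuous_on_const)
  then show ?thesis unfolding step_def .
qed

lemma cont_Sw: "continuous_on UNIV (\<lambda>S::real^'n^'n. S *v w)"
  by (rule cont_mv) (intro continuous_intros)+

lemma fS_meas: "(\<lambda>S. f (s + S *v w)) \<in> borel_measurable D"
  unfolding meas_D
  by (intro borel_measurable_continuous_onI continuous_on_compose2[OF f_contI] continuous_on_add
        continuous_on_const cont_Sw) auto

lemma step_meas: "(\<lambda>S. step x S) \<in> borel_measurable D"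
proof -
  have "continuous_on UNIV (\<lambda>S. step (fst (x, S)) (snd (x, S)))"
    by (rule continuous_on_compose2[OF step_cont]) (auto intro!: continuous_intros)
  then show ?thesis unfolding meas_D by (intro borel_measurable_continuous_onI) simp
qed

lemma fS_int: "integrable D (\<lambda>S. f (s + S *v w))"
proof (rule Bochner_Integration.integrable_bound)
  let ?M = "\<lambda>S. \<bar>finf\<bar> + \<bar>f s\<bar> + \<bar>S \<bullet> (\<chi> i j. gradf s $ i * w $ j)\<bar> + Lf / 2 * ((transpose S ** S) \<bullet> (\<chi> i j. w$i * w$j))"
  show "integrable D ?M"
  proof -
    have i1: "integrable D (\<lambda>S. S \<bullet> (\<chi> i j. gradf s $ i * w $ j))" using ES by simp
    have i2: "integrable D (\<lambda>S. (transpose S ** S) \<bullet> (\<chi> i j. w$i * w$j))" using ESTS by simp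
    have i3: "integrable D (\<lambda>S. \<bar>finf\<bar> + \<bar>f s\<bar>)" by simp
    show ?thesis using Bochner_Integration.integrable_add[OF Bochner_Integration.integrable_add[OF i3 integrable_abs[OF i1]] integrable_mult_right[OF i2, of "Lf/2"]]
      by simp
  qed
  show "(\<lambda>S. f (s + S *v w)) \<in> borel_measurable D" by (rule fS_meas)
  show "AE S in D. norm (f (s + S *v w)) \<le> norm (?M S)"
  proof (rule AE_I2)
    fix S
    have lo: "finf \<le> f (s + S *v w)" by (rule finf_le)
    have hi: "f (s + S *v w) \<le> f s + gradf s \<bullet> (S *v w) + Lf / 2 * (norm (S *v w))^2" by (rule up)
    have nn: "0 \<le> Lf / 2 * (norm (S *v w))^2" using Lf_pos by simp
    have "norm (f (s + S *v w)) \<le> ?M S"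
      using lo hi nn unfolding norm_mv_sq inner_mv_as_mat[symmetric] by auto
    also have "\<dots> \<le> norm (?M S)" by simp
    finally show "norm (f (s + S *v w)) \<le> norm (?M S)" .
  qed
qed

lemma ft_eq: "f_tilde f s D x = (\<integral>S. f (s + S *v (x - s)) \<partial>D)"
  unfolding f_tilde_def f_sketch_def ..

lemma pointwise:
  assumes bnd: "\<forall>h. (norm (S *v h))^2 \<le> Lm * (norm h)^2"
  shows "(norm (step x S - xs))^2 \<le> (norm (x - xs))^2
     - 2 * \<gamma> * (f (s + S *v (x - s)) - f (s + S *v (xs - s)))
     + 2 * \<gamma>^2 * (Lf * Lm) * (f (s + S *v (x - s)) - finf)"
proof -
  define L where "L = Lf * Lm"
  have L: "0 < L" unfolding L_def using Lf_pos Lm_pos by simp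
  define y where "y = s + S *v (x - s)"
  define G where "G = transpose S *v gradf y"
  have a: "f y - f (s + S *v (xs - s)) \<le> G \<bullet> (x - xs)"
  proof -
    have "f y + gradf y \<bullet> ((s + S *v (xs - s)) - y) \<le> f (s + S *v (xs - s))"
      by (rule tangent_ineq[OF convex der])
    moreover have "(s + S *v (xs - s)) - y = S *v (xs - x)"
      unfolding y_def by (simp add: matrix_vector_mult_diff_distrib algebra_simps)
    moreover have "gradf y \<bullet> (S *v (xs - x)) = - (G \<bullet> (x - xs))"
      unfolding G_def inner_mat_transpose by (simp add: inner_diff_right)
    ultimately show ?thesis by simp
  qed
  have b: "(norm G)^2 \<le> 2 * L * (f y - finf)"
  proof -
    define v where "v = - (1 / L) *\<^sub>R G"
    have "f (y + S *v v) \<le> f y + gradf y \<bullet> (S *v v) + Lf / 2 * (norm (S *v v))^2" by (rule up)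
    moreover have "gradf y \<bullet> (S *v v) = -((norm G)^2 / L)"
      unfolding inner_mat_transpose G_def[symmetric] v_def by (simp add: power2_norm_eq_inner)
    moreover have "(norm (S *v v))^2 \<le> Lm * ((norm G)^2 / L^2)"
      using bnd[rule_format, of v] unfolding v_def using L by (simp add: power_divide)
    then have "Lf / 2 * (norm (S *v v))^2 \<le> Lf / 2 * (Lm * ((norm G)^2 / L^2))"
      using Lf_pos by (intro mult_left_mono) auto
    moreover have "finf \<le> f (y + S *v v)" by (rule finf_le)
    ultimately have "finf \<le> f y - (norm G)^2 / L + Lf / 2 * (Lm * ((norm G)^2 / L^2))"
      by linarith
    also have "Lf / 2 * (Lm * ((norm G)^2 / L^2)) = (norm G)^2 / (2 * L)"
      unfolding L_def by (rule aux_e4[OF Lf_pos Lm_pos])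
    finally have "(norm G)^2 / L - (norm G)^2 / (2 * L) \<le> f y - finf" by simp
    moreover have "(norm G)^2 / L - (norm G)^2 / (2 * L) = (norm G)^2 / (2 * L)"
      using L by (rule aux_e5)
    ultimately show ?thesis using L aux_e6 by simp
  qed
  have c: "(norm (step x S - xs))^2 = (norm (x - xs))^2 - 2 * \<gamma> * (G \<bullet> (x - xs)) + \<gamma>^2 * (norm G)^2"
  proof -
    have "step x S - xs = (x - xs) - \<gamma> *\<^sub>R G" unfolding step_def G_def y_def by simp
    moreover have "(norm ((x - xs) - \<gamma> *\<^sub>R G))^2 = (norm (x - xs))^2 - 2 * \<gamma> * (G \<bullet> (x - xs)) + \<gamma>^2 * (norm G)^2"
      unfolding power2_norm_eq_inner
      by (simp add: inner_diff_left inner_diff_right inner_commute power2_eq_square[of \<gamma>] algebra_simps)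
    moreover have "x - \<gamma> *\<^sub>R G - xs = (x - xs) - \<gamma> *\<^sub>R G" by (simp add: algebra_simps)
    ultimately show ?thesis by (simp only: step_def G_def y_def)
  qed
  have "2 * \<gamma> * (f y - f (s + S *v (xs - s))) \<le> 2 * \<gamma> * (G \<bullet> (x - xs))"
    using a gamma_pos by simp
  moreover have "\<gamma>^2 * (norm G)^2 \<le> \<gamma>^2 * (2 * L * (f y - finf))"
    using b by (simp add: mult_left_mono)
  ultimately show ?thesis unfolding c L_def[symmetric] y_def[symmetric] by (simp add: algebra_simps)
qed

end



context dsgd_setting
begin

abbreviation "ft \<equiv> f_tilde f s D"

lemma one_step:
  assumes xmin: "\<And>z. ft xs \<le> ft z"
  shows "(\<integral>\<^sup>+S. ennreal ((norm (step x S - xs))^2) \<partial>D)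
           \<le> ennreal ((norm (x - xs))^2 - \<gamma> * (ft x - ft xs) + 2 * \<gamma>^2 * (Lf * Lm) * (ft xs - finf))"
    and "0 \<le> (norm (x - xs))^2 - \<gamma> * (ft x - ft xs) + 2 * \<gamma>^2 * (Lf * Lm) * (ft xs - finf)"
proof -
  define R where "R S = (norm (x - xs))^2
     - 2 * \<gamma> * (f (s + S *v (x - s)) - f (s + S *v (xs - s)))
     + 2 * \<gamma>^2 * (Lf * Lm) * (f (s + S *v (x - s)) - finf)" for S
  have AE1: "AE S in D. (norm (step x S - xs))^2 \<le> R S"
    using AE_bound by eventually_elim (simp add: R_def pointwise)
  have AE0: "AE S in D. 0 \<le> R S"
    using AE1 by eventually_elim (meson order.trans zero_le_power2)
  have i1: "integrable D (\<lambda>S. f (s + S *v (x - s)))" by (rule fS_int)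
  have i2: "integrable D (\<lambda>S. f (s + S *v (xs - s)))" by (rule fS_int)
  have intR: "integrable D R" unfolding R_def using i1 i2 by simp
  have intR_eq: "(\<integral>S. R S \<partial>D) = (norm (x - xs))^2 - 2 * \<gamma> * (ft x - ft xs) + 2 * \<gamma>^2 * (Lf * Lm) * (ft x - finf)"
    unfolding R_def ft_eq using i1 i2 by (simp add: prob_space)
  have a_nn: "0 \<le> ft x - ft xs" using xmin by simp
  have g1: "2 * \<gamma> * (Lf * Lm) \<le> 1" by (rule gamma_le)
  have "\<gamma> * (ft x - ft xs) * (2 * \<gamma> * (Lf * Lm)) \<le> \<gamma> * (ft x - ft xs) * 1"
    using a_nn gamma_pos g1 by (intro mult_left_mono) auto
  then have le: "(\<integral>S. R S \<partial>D) \<le> (norm (x - xs))^2 - \<gamma> * (ft x - ft xs) + 2 * \<gamma>^2 * (Lf * Lm) * (ft xs - finf)"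
    unfolding intR_eq by (simp add: algebra_simps power2_eq_square)
  have nnR: "0 \<le> (\<integral>S. R S \<partial>D)" using AE0 by (rule integral_nonneg_AE)
  have "(\<integral>\<^sup>+S. ennreal ((norm (step x S - xs))^2) \<partial>D) \<le> (\<integral>\<^sup>+S. ennreal (R S) \<partial>D)"
    using AE1 by (intro nn_integral_mono_AE) (auto elim: AE_mp intro: ennreal_leI)
  also have "\<dots> = ennreal (\<integral>S. R S \<partial>D)" by (rule nn_integral_eq_integral[OF intR AE0])
  also have "\<dots> \<le> ennreal ((norm (x - xs))^2 - \<gamma> * (ft x - ft xs) + 2 * \<gamma>^2 * (Lf * Lm) * (ft xs - finf))"
    using le by (rule ennreal_leI)
  finally show "(\<integral>\<^sup>+S. ennreal ((norm (step x S - xs))^2) \<partial>D)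
           \<le> ennreal ((norm (x - xs))^2 - \<gamma> * (ft x - ft xs) + 2 * \<gamma>^2 * (Lf * Lm) * (ft xs - finf))" .
  show "0 \<le> (norm (x - xs))^2 - \<gamma> * (ft x - ft xs) + 2 * \<gamma>^2 * (Lf * Lm) * (ft xs - finf)"
    using nnR le by linarith
qed

lemma ft_convex: "convex_on UNIV ft"
proof (rule convex_onI)
  fix t a b :: "real^'n" and u :: real
  fix t :: real assume t: "0 < t" "t < 1"
  have pw: "f (s + S *v ((1 - t) *\<^sub>R a + t *\<^sub>R b - s)) \<le> (1 - t) * f (s + S *v (a - s)) + t * f (s + S *v (b - s))" for S
  proof -
    have "s + S *v ((1 - t) *\<^sub>R a + t *\<^sub>R b - s) = (1 - t) *\<^sub>R (s + S *v (a - s)) + t *\<^sub>R (s + S *v (b - s))"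
    proof -
      have "(1 - t) *\<^sub>R a + t *\<^sub>R b - s = (1 - t) *\<^sub>R (a - s) + t *\<^sub>R (b - s)" by (simp add: algebra_simps)
      then show ?thesis by (simp add: matrix_vector_right_distrib matrix_vector_mult_scaleR algebra_simps)
    qed
    then show ?thesis using convex_onD[OF convex, of t] t by simp
  qed
  have "ft ((1 - t) *\<^sub>R a + t *\<^sub>R b) \<le> (\<integral>S. (1 - t) * f (s + S *v (a - s)) + t * f (s + S *v (b - s)) \<partial>D)"
    unfolding ft_eq using pw fS_int by (intro integral_mono) auto
  also have "\<dots> = (1 - t) * ft a + t * ft b" unfolding ft_eq using fS_int by simp
  finally show "ft ((1 - t) *\<^sub>R a + t *\<^sub>R b) \<le> (1 - t) * ft a + t * ft b" .
qed simp

lemma ft_cont: "continuous_on UNIV ft"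
  by (rule convex_on_continuous[OF open_UNIV ft_convex])

lemma dsgd_Suc_step: "dsgd gradf s \<gamma> x0 \<omega> (Suc t) = step (dsgd gradf s \<gamma> x0 \<omega> t) (\<omega> t)"
  by (simp add: step_def)

lemma dsgd_shift: "dsgd gradf s \<gamma> x0 (case_nat S \<omega>) (Suc t) = dsgd gradf s \<gamma> (step x0 S) \<omega> t"
  by (induction t) (simp_all add: step_def)

abbreviation "P \<equiv> PiM (UNIV :: nat set) (\<lambda>_. D)"

lemma dsgd_meas: "(\<lambda>\<omega>. dsgd gradf s \<gamma> x0 \<omega> t) \<in> borel_measurable P"
proof (induction t)
  case 0 then show ?case by simp
next
  case (Suc t)
  have comp: "(\<lambda>\<omega>. \<omega> t) \<in> measurable P borel"
    using measurable_component_singleton[of t UNIV "\<lambda>_. D"]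
    by (simp add: measurable_cong_sets[OF refl D_sets])
  have pair: "(\<lambda>\<omega>. (dsgd gradf s \<gamma> x0 \<omega> t, \<omega> t)) \<in> measurable P (borel \<Otimes>\<^sub>M borel)"
    using Suc comp by (rule measurable_Pair)
  have st: "(\<lambda>p. step (fst p) (snd p)) \<in> borel_measurable (borel \<Otimes>\<^sub>M borel)"
    unfolding borel_prod by (rule borel_measurable_continuous_onI[OF step_cont])
  have "(\<lambda>\<omega>. step (fst (dsgd gradf s \<gamma> x0 \<omega> t, \<omega> t)) (snd (dsgd gradf s \<gamma> x0 \<omega> t, \<omega> t))) \<in> borel_measurable P"
    using measurable_compose[OF pair st] by (simp add: comp_def)
  then show ?case unfolding dsgd_Suc_step by simp
qed

lemma nn_PiM_iter:
  assumes F: "F \<in> borel_measurable P"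
  shows "(\<integral>\<^sup>+\<omega>. F \<omega> \<partial>P) = (\<integral>\<^sup>+S. (\<integral>\<^sup>+\<omega>. F (case_nat S \<omega>) \<partial>P) \<partial>D)"
proof -
  interpret S: sequence_space D ..
  interpret Pr: pair_sigma_finite D S.S ..
  have m: "(\<lambda>(s, \<omega>). case_nat s \<omega>) \<in> measurable (D \<Otimes>\<^sub>M S.S) S.S"
    unfolding split_beta' by (intro measurable_case_nat') auto
  have "(\<integral>\<^sup>+\<omega>. F \<omega> \<partial>S.S) = (\<integral>\<^sup>+\<omega>. F \<omega> \<partial>distr (D \<Otimes>\<^sub>M S.S) S.S (\<lambda>(s, \<omega>). case_nat s \<omega>))"
    by (simp add: S.PiM_iter)
  also have "\<dots> = (\<integral>\<^sup>+x. F (case_nat (fst x) (snd x)) \<partial>(D \<Otimes>\<^sub>M S.S))"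
    using F m by (subst nn_integral_distr) (auto simp: split_beta')
  also have "\<dots> = (\<integral>\<^sup>+S. (\<integral>\<^sup>+\<omega>. F (case_nat S \<omega>) \<partial>S.S) \<partial>D)"
  proof -
    have "(\<lambda>x. F (case_nat (fst x) (snd x))) \<in> borel_measurable (D \<Otimes>\<^sub>M S.S)"
      using measurable_compose[OF m F] by (simp add: split_beta')
    then show ?thesis by (subst S.nn_integral_fst[symmetric]) auto
  qed
  finally show ?thesis .
qed


end


context dsgd_setting begin
lemma ft_meas[measurable]: "ft \<in> borel_measurable borel"
  by (rule borel_measurable_continuous_onI[OF ft_cont])

declare dsgd_meas[measurable]

lemma ft_ge: "finf \<le> ft x"
proof -
  have "(\<integral>S. finf \<partial>D) \<le> (\<integral>S. f (s + S *v (x - s)) \<partial>D)"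
    by (intro integral_mono) (auto simp: fS_int finf_le)
  then show ?thesis unfolding ft_eq by (simp add: prob_space)
qed

lemma c_nn: "0 \<le> 2 * \<gamma>^2 * (Lf * Lm) * (ft xs - finf)"
  using ft_ge[of xs] Lf_pos Lm_pos by (intro mult_nonneg_nonneg) auto

lemma P_prob: "prob_space P"
  by (rule prob_space_PiM) (rule prob_space_axioms)

lemma ennreal_add3:
  assumes "0 \<le> a" "0 \<le> b" "0 \<le> c"
  shows "ennreal a + ennreal (b + c) = ennreal (a + c) + ennreal b"
proof -
  have "ennreal a + ennreal (b + c) = ennreal (a + (b + c))"
    using assms by (intro ennreal_plus[symmetric]) auto
  also have "a + (b + c) = (a + c) + b" by simp
  also have "ennreal ((a + c) + b) = ennreal (a + c) + ennreal b"
    using assms by (intro ennreal_plus) auto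
  finally show ?thesis .
qed

lemma ennreal_add_eq:
  assumes "0 \<le> a" "0 \<le> b" "a + b = z"
  shows "ennreal a + ennreal b = ennreal z"
  using ennreal_plus[OF assms(1,2)] assms(3) by simp

lemma main_ind:
  assumes xmin: "\<And>z. ft xs \<le> ft z"
  shows "(\<integral>\<^sup>+\<omega>. ennreal ((norm (dsgd gradf s \<gamma> x0 \<omega> T - xs))^2
              + \<gamma> * (\<Sum>t<T. ft (dsgd gradf s \<gamma> x0 \<omega> t) - ft xs)) \<partial>P)
          \<le> ennreal ((norm (x0 - xs))^2 + real T * (2 * \<gamma>^2 * (Lf * Lm) * (ft xs - finf)))"
proof (induction T arbitrary: x0)
  case 0
  interpret Pp: prob_space P by (rule P_prob)
  show ?case by (simp add: Pp.emeasure_space_1)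
next
  case (Suc T)
  interpret Pp: prob_space P by (rule P_prob)
  define c where "c = 2 * \<gamma>^2 * (Lf * Lm) * (ft xs - finf)"
  define a where "a z = ft z - ft xs" for z
  have a_nn: "0 \<le> a z" for z using xmin unfolding a_def by simp
  define Q where "Q x \<omega> = (norm (dsgd gradf s \<gamma> x \<omega> T - xs))^2 + \<gamma> * (\<Sum>t<T. a (dsgd gradf s \<gamma> x \<omega> t))" for x \<omega>
  have Q_nn: "0 \<le> Q x \<omega>" for x \<omega>
  proof -
    have "0 \<le> (\<Sum>t<T. a (dsgd gradf s \<gamma> x \<omega> t))" by (rule sum_nonneg) (rule a_nn)
    then have "0 \<le> \<gamma> * (\<Sum>t<T. a (dsgd gradf s \<gamma> x \<omega> t))" using gamma_pos by simp
    then show ?thesis unfolding Q_def by simp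
  qed
  define F where "F \<omega> = ennreal ((norm (dsgd gradf s \<gamma> x0 \<omega> (Suc T) - xs))^2
              + \<gamma> * (\<Sum>t<Suc T. ft (dsgd gradf s \<gamma> x0 \<omega> t) - ft xs))" for \<omega>
  have mF: "F \<in> borel_measurable P" unfolding F_def by measurable
  have mQ: "(\<lambda>\<omega>. ennreal (Q x \<omega>)) \<in> borel_measurable P" for x unfolding Q_def a_def by measurable
  have mstep: "(\<lambda>S. ennreal ((norm (step x0 S - xs))^2)) \<in> borel_measurable D"
    using step_meas[of x0] by measurable
  have key: "F (case_nat S \<omega>) = ennreal (\<gamma> * a x0) + ennreal (Q (step x0 S) \<omega>)" for S \<omega>
  proof -
    have "(\<Sum>t<Suc T. ft (dsgd gradf s \<gamma> x0 (case_nat S \<omega>) t) - ft xs)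
        = a x0 + (\<Sum>t<T. a (dsgd gradf s \<gamma> (step x0 S) \<omega> t))"
      unfolding sum.lessThan_Suc_shift a_def by (simp del: dsgd.simps(2) add: dsgd_shift)
    then have "(norm (dsgd gradf s \<gamma> x0 (case_nat S \<omega>) (Suc T) - xs))^2
              + \<gamma> * (\<Sum>t<Suc T. ft (dsgd gradf s \<gamma> x0 (case_nat S \<omega>) t) - ft xs)
          = \<gamma> * a x0 + Q (step x0 S) \<omega>"
      unfolding Q_def dsgd_shift by (simp add: algebra_simps)
    then show ?thesis unfolding F_def
      by (intro ennreal_add_eq[symmetric]) (use a_nn[of x0] gamma_pos Q_nn in auto)
  qed
  have "(\<integral>\<^sup>+\<omega>. F \<omega> \<partial>P) = (\<integral>\<^sup>+S. (\<integral>\<^sup>+\<omega>. F (case_nat S \<omega>) \<partial>P) \<partial>D)"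
    by (rule nn_PiM_iter[OF mF])
  also have "\<dots> = (\<integral>\<^sup>+S. ennreal (\<gamma> * a x0) + (\<integral>\<^sup>+\<omega>. ennreal (Q (step x0 S) \<omega>) \<partial>P) \<partial>D)"
    unfolding key by (subst nn_integral_add) (auto simp: mQ Pp.emeasure_space_1)
  also have "\<dots> \<le> (\<integral>\<^sup>+S. ennreal (\<gamma> * a x0) + ennreal ((norm (step x0 S - xs))^2 + real T * c) \<partial>D)"
  proof (intro nn_integral_mono add_left_mono)
    fix S
    show "(\<integral>\<^sup>+\<omega>. ennreal (Q (step x0 S) \<omega>) \<partial>P) \<le> ennreal ((norm (step x0 S - xs))^2 + real T * c)"
      using Suc.IH[of "step x0 S"] unfolding Q_def a_def c_def .
  qed
  also have "\<dots> = (\<integral>\<^sup>+S. ennreal (\<gamma> * a x0 + real T * c) + ennreal ((norm (step x0 S - xs))^2) \<partial>D)"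
  proof (rule nn_integral_cong)
    fix S
    have "0 \<le> c" unfolding c_def by (rule c_nn)
    then show "ennreal (\<gamma> * a x0) + ennreal ((norm (step x0 S - xs))^2 + real T * c)
        = ennreal (\<gamma> * a x0 + real T * c) + ennreal ((norm (step x0 S - xs))^2)"
      using a_nn[of x0] gamma_pos by (intro ennreal_add3) auto
  qed
  also have "\<dots> = ennreal (\<gamma> * a x0 + real T * c) + (\<integral>\<^sup>+S. ennreal ((norm (step x0 S - xs))^2) \<partial>D)"
    by (subst nn_integral_add) (auto simp: mstep emeasure_space_1)
  also have "\<dots> \<le> ennreal (\<gamma> * a x0 + real T * c) + ennreal ((norm (x0 - xs))^2 - \<gamma> * a x0 + c)"
    using one_step(1)[OF xmin, of x0] unfolding a_def c_def by (intro add_left_mono) auto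
  also have "\<dots> = ennreal ((norm (x0 - xs))^2 + real (Suc T) * c)"
  proof -
    have "0 \<le> (norm (x0 - xs))^2 - \<gamma> * a x0 + c" using one_step(2)[OF xmin, of x0] unfolding a_def c_def .
    moreover have "0 \<le> c" unfolding c_def by (rule c_nn)
    ultimately show ?thesis using a_nn[of x0] gamma_pos
      by (intro ennreal_add_eq) (auto simp: algebra_simps)
  qed
  finally show ?case unfolding F_def c_def .
qed

end

lemma aux_final:
  assumes "0 < g" "0 < T"
  shows "(N + T * (2 * g^2 * K * d)) / (g * T) = N / (g * T) + 2 * g * K * (d::real)"
  using assms by (simp add: field_simps power2_eq_square)

theorem mainTheorem9:
  fixes f :: "real^'n \<Rightarrow> real" and gradf :: "real^'n \<Rightarrow> real^'n"
    and s x0 xstar :: "real^'n" and D :: "(real^'n^'n) measure"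
    and Lf \<gamma> :: real and T :: nat
  assumes D_prob: "prob_space D"
    and D_sets: "sets D = sets borel"
    and ES: "integrable D (\<lambda>S. S)" "(\<integral>S. S \<partial>D) = mat 1"
    and ESTS: "integrable D (\<lambda>S. transpose S ** S)"
    and convex: "convex_on UNIV f"
    and smooth: "L_smooth Lf f gradf"
    and bdd: "bdd_below (range f)"
    and Lmax_fin: "\<exists>L. AE S in D. lambda_max (transpose S ** S) \<le> L"
    and xstar_min: "\<forall>x. f_tilde f s D xstar \<le> f_tilde f s D x"
    and gamma_pos: "0 < \<gamma>"
    and gamma_le: "\<gamma> \<le> 1 / (2 * Lf * L_S_max D)"
    and T_ge: "T \<ge> 1"
  shows "(\<integral>\<omega>. (\<Sum>t<T. f_tilde f s D (dsgd gradf s \<gamma> x0 \<omega> t)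
                        - (INF x. f_tilde f s D x)) / real T
          \<partial>(PiM UNIV (\<lambda>_::nat. D)))
       \<le> (norm (x0 - xstar))^2 / (\<gamma> * real T)
         + 2 * \<gamma> * Lf * L_S_max D * ((INF x. f_tilde f s D x) - (INF x. f x))"
proof -
  interpret prob_space D by (rule D_prob)
  define Lm where "Lm = L_S_max D"
  have Lm_nn: "0 \<le> Lm" and AEl: "AE S in D. lambda_max (transpose S ** S) \<le> Lm"
    using L_S_max_props[OF D_prob Lmax_fin] unfolding Lm_def by auto
  have "0 < 1 / (2 * Lf * Lm)" using gamma_pos gamma_le unfolding Lm_def by linarith
  then have prodpos: "0 < Lf * Lm" by (simp add: zero_less_divide_iff)
  then have Lm_pos: "0 < Lm" using Lm_nn by (cases "Lm = 0") auto
  have Lf_pos: "0 < Lf" using prodpos Lm_pos by (simp add: zero_less_mult_iff)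
  have g_le: "2 * \<gamma> * (Lf * Lm) \<le> 1"
  proof -
    have "\<gamma> * (2 * Lf * Lm) \<le> 1 / (2 * Lf * Lm) * (2 * Lf * Lm)"
      using gamma_le prodpos unfolding Lm_def[symmetric] by (intro mult_right_mono) auto
    also have "\<dots> = 1" using Lf_pos Lm_pos by simp
    finally show ?thesis by (simp add: algebra_simps)
  qed
  have AEb: "AE S in D. \<forall>h. (norm (S *v h))^2 \<le> Lm * (norm h)^2"
    using AEl
  proof eventually_elim
    case (elim S)
    show ?case
    proof
      fix h
      have "(norm (S *v h))^2 \<le> lambda_max (transpose S ** S) * (norm h)^2"
        using norm_sq_le_lambda_max by blast
      also have "\<dots> \<le> Lm * (norm h)^2" using elim by (intro mult_right_mono) auto
      finally show "(norm (S *v h))^2 \<le> Lm * (norm h)^2" .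
    qed
  qed
  define finf where "finf = (INF x. f x)"
  have finf_le: "finf \<le> f y" for y unfolding finf_def using bdd by (rule cINF_lower) simp
  interpret ds: dsgd_setting D f gradf s Lf Lm finf \<gamma>
    by unfold_locales (use D_sets ES ESTS convex smooth Lf_pos Lm_pos AEb finf_le gamma_pos g_le in auto)
  let ?ft = "f_tilde f s D"
  have xmin: "\<And>z. ?ft xstar \<le> ?ft z" using xstar_min by auto
  have inf_eq: "(INF x. ?ft x) = ?ft xstar"
  proof (rule antisym)
    show "(INF x. ?ft x) \<le> ?ft xstar"
      by (rule cINF_lower) (auto intro: bdd_belowI[of _ "?ft xstar"] xmin)
    show "?ft xstar \<le> (INF x. ?ft x)" by (rule cINF_greatest) (auto intro: xmin)
  qed
  define c where "c = 2 * \<gamma>^2 * (Lf * Lm) * (?ft xstar - finf)"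
  define N where "N = (norm (x0 - xstar))^2"
  have Tpos: "0 < real T" using T_ge by simp
  define Z where "Z \<omega> = (norm (dsgd gradf s \<gamma> x0 \<omega> T - xstar))^2
              + \<gamma> * (\<Sum>t<T. ?ft (dsgd gradf s \<gamma> x0 \<omega> t) - ?ft xstar)" for \<omega>
  define G where "G \<omega> = (\<Sum>t<T. ?ft (dsgd gradf s \<gamma> x0 \<omega> t) - (INF x. ?ft x)) / real T" for \<omega>
  have mainb: "(\<integral>\<^sup>+\<omega>. ennreal (Z \<omega>) \<partial>ds.P) \<le> ennreal (N + real T * c)"
    unfolding Z_def N_def c_def by (rule ds.main_ind[OF xmin])
  have sum_nn: "0 \<le> (\<Sum>t<T. ?ft (dsgd gradf s \<gamma> x0 \<omega> t) - ?ft xstar)" for \<omega>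
    by (rule sum_nonneg) (use xmin in auto)
  have Z_nn: "0 \<le> Z \<omega>" for \<omega> unfolding Z_def
    by (intro add_nonneg_nonneg mult_nonneg_nonneg) (use sum_nn gamma_pos in auto)
  have G_nn: "0 \<le> G \<omega>" for \<omega> unfolding G_def inf_eq using sum_nn Tpos by simp
  have G_le: "G \<omega> \<le> (1 / (\<gamma> * real T)) * Z \<omega>" for \<omega>
  proof -
    have "G \<omega> = (\<gamma> * (\<Sum>t<T. ?ft (dsgd gradf s \<gamma> x0 \<omega> t) - ?ft xstar)) / (\<gamma> * real T)"
      unfolding G_def inf_eq using gamma_pos by simp
    also have "\<dots> \<le> Z \<omega> / (\<gamma> * real T)"
      unfolding Z_def using gamma_pos Tpos by (intro divide_right_mono) auto
    finally show ?thesis by simp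
  qed
  have mG: "G \<in> borel_measurable ds.P" unfolding G_def by measurable
  have mZ: "(\<lambda>\<omega>. ennreal (Z \<omega>)) \<in> borel_measurable ds.P" unfolding Z_def by measurable
  have "(\<integral>\<^sup>+\<omega>. ennreal (G \<omega>) \<partial>ds.P) \<le> (\<integral>\<^sup>+\<omega>. ennreal (1 / (\<gamma> * real T)) * ennreal (Z \<omega>) \<partial>ds.P)"
  proof (intro nn_integral_mono)
    fix \<omega>
    have "ennreal (G \<omega>) \<le> ennreal ((1 / (\<gamma> * real T)) * Z \<omega>)" by (rule ennreal_leI[OF G_le])
    also have "\<dots> = ennreal (1 / (\<gamma> * real T)) * ennreal (Z \<omega>)"
      using gamma_pos Tpos Z_nn by (intro ennreal_mult) auto
    finally show "ennreal (G \<omega>) \<le> ennreal (1 / (\<gamma> * real T)) * ennreal (Z \<omega>)" .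
  qed
  also have "\<dots> = ennreal (1 / (\<gamma> * real T)) * (\<integral>\<^sup>+\<omega>. ennreal (Z \<omega>) \<partial>ds.P)"
    by (rule nn_integral_cmult[OF mZ])
  also have "\<dots> \<le> ennreal (1 / (\<gamma> * real T)) * ennreal (N + real T * c)"
    by (rule mult_left_mono[OF mainb]) simp
  also have "\<dots> = ennreal ((N + real T * c) / (\<gamma> * real T))"
    using gamma_pos Tpos ds.c_nn[of xstar] unfolding c_def N_def
    by (subst ennreal_mult[symmetric]) auto
  finally have nnb: "(\<integral>\<^sup>+\<omega>. ennreal (G \<omega>) \<partial>ds.P) \<le> ennreal ((N + real T * c) / (\<gamma> * real T))" .
  have "(\<integral>\<omega>. G \<omega> \<partial>ds.P) = enn2real (\<integral>\<^sup>+\<omega>. ennreal (G \<omega>) \<partial>ds.P)"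
    by (rule integral_eq_nn_integral[OF mG]) (simp add: G_nn)
  also have "\<dots> \<le> enn2real (ennreal ((N + real T * c) / (\<gamma> * real T)))"
    by (rule enn2real_mono[OF nnb]) simp
  also have "\<dots> = (N + real T * c) / (\<gamma> * real T)"
    using gamma_pos Tpos ds.c_nn[of xstar] unfolding c_def N_def by (intro enn2real_ennreal) auto
  also have "\<dots> = N / (\<gamma> * real T) + 2 * \<gamma> * (Lf * Lm) * (?ft xstar - finf)"
    unfolding c_def by (rule aux_final[OF gamma_pos Tpos])
  finally show ?thesis unfolding G_def N_def inf_eq Lm_def finf_def by (simp add: mult.assoc)
qed


end
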